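(* Let $G^c$ be a vertex-coloured graph with $n$ vertices and $c$ colours whose minimum degree satisfies $\delta(G^c)>(n-1)-\sqrt{n-1}$. Then $\gamma^t(G^c)\le c+1$.
   Context: A vertex-coloured graph $G^c$ with colour set $\{1,\dots,c\}$ is a finite simple graph in which every vertex receives exactly one colour and every colour appears on at least one vertex. A dominating set is tropical if every colour appears on at least one of its vertices; $\gamma^t(G^c)$ is the minimum size of a tropical dominating set. *)

theory Defs
  imports Complex_Main
begin

definition simple_graph :: "'a set \<Rightarrow> ('a \<Rightarrow> 'a \<Rightarrow> bool) \<Rightarrow> bool" where
  "simple_graph V E \<longleftrightarrow> finite V \<and> (\<forall>u v. E u v \<longrightarrow> u \<in> V \<and> v \<in> V)
     \<and> (\<forall>u v. E u v \<longrightarrow> E v u) \<and> (\<forall>v. \<not> E v v)"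

definition vertex_coloured :: "'a set \<Rightarrow> ('a \<Rightarrow> nat) \<Rightarrow> nat \<Rightarrow> bool" where
  "vertex_coloured V col c \<longleftrightarrow> col ` V = {1..c}"

definition degree :: "'a set \<Rightarrow> ('a \<Rightarrow> 'a \<Rightarrow> bool) \<Rightarrow> 'a \<Rightarrow> nat" where
  "degree V E v = card {u \<in> V. E v u}"

definition min_degree :: "'a set \<Rightarrow> ('a \<Rightarrow> 'a \<Rightarrow> bool) \<Rightarrow> nat" where
  "min_degree V E = Min (degree V E ` V)"

definition dominating_set :: "'a set \<Rightarrow> ('a \<Rightarrow> 'a \<Rightarrow> bool) \<Rightarrow> 'a set \<Rightarrow> bool" where
  "dominating_set V E D \<longleftrightarrow> D \<subseteq> V \<and> (\<forall>v \<in> V. v \<in> D \<or> (\<exists>u \<in> D. E v u))"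

definition tropical_dominating_set ::
    "'a set \<Rightarrow> ('a \<Rightarrow> 'a \<Rightarrow> bool) \<Rightarrow> ('a \<Rightarrow> nat) \<Rightarrow> nat \<Rightarrow> 'a set \<Rightarrow> bool" where
  "tropical_dominating_set V E col c D \<longleftrightarrow> dominating_set V E D \<and> {1..c} \<subseteq> col ` D"

definition tropical_domination_number ::
    "'a set \<Rightarrow> ('a \<Rightarrow> 'a \<Rightarrow> bool) \<Rightarrow> ('a \<Rightarrow> nat) \<Rightarrow> nat \<Rightarrow> nat" where
  "tropical_domination_number V E col c =
     Min {card D | D. tropical_dominating_set V E col c D}"

end

theory Submission
  imports Defs
begin

theorem mainTheorem8:
  fixes V :: "'a set" and E :: "'a \<Rightarrow> 'a \<Rightarrow> bool" and col :: "'a \<Rightarrow> nat" and c :: nat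
  assumes "simple_graph V E"
    and "V \<noteq> {}"
    and "vertex_coloured V col c"
    and "real (min_degree V E) > real (card V - 1) - sqrt (real (card V - 1))"
  shows "tropical_domination_number V E col c \<le> c + 1"
proof -
  have fin: "finite V" and inV: "\<And>u v. E u v \<Longrightarrow> u \<in> V \<and> v \<in> V"
    and sym: "\<And>u v. E u v \<Longrightarrow> E v u" and irr: "\<And>v. \<not> E v v"
    using assms(1) unfolding simple_graph_def by blast+
  have colV: "col ` V = {1..c}" using assms(3) unfolding vertex_coloured_def .
  define n where "n = card V"
  define \<delta> where "\<delta> = min_degree V E"
  have n1: "n \<ge> 1" using assms(2) fin n_def by (simp add: Suc_le_eq card_gt_0_iff)
  have degle: "\<And>v. v \<in> V \<Longrightarrow> \<delta> \<le> degree V E v"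
    unfolding \<delta>_def min_degree_def using fin by (simp add: Min_le)
  have degub: "\<And>v. v \<in> V \<Longrightarrow> degree V E v \<le> n - 1"
  proof -
    fix v assume v: "v \<in> V"
    have "{u \<in> V. E v u} \<subseteq> V - {v}" using irr by auto
    hence "card {u \<in> V. E v u} \<le> card (V - {v})" using fin by (intro card_mono) auto
    thus "degree V E v \<le> n - 1" using v fin unfolding degree_def n_def by simp
  qed
  obtain v1 where v1: "v1 \<in> V" using assms(2) by blast
  have dn: "\<delta> \<le> n - 1" using degle[OF v1] degub[OF v1] by simp
  define K where "K = n - 1 - \<delta>"
  have "real K < sqrt (real (n - 1))" using assms(4) dn unfolding K_def n_def \<delta>_def
    by (simp add: of_nat_diff n_def)
  hence "real K * real K < real (n - 1)"
  proof -
    assume h: "real K < sqrt (real (n - 1))"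
    have "real K * real K < sqrt (real (n - 1)) * sqrt (real (n - 1))"
      using h by (intro mult_strict_mono') auto
    thus ?thesis by simp
  qed
  hence "K * K < n - 1" by (metis of_nat_less_iff of_nat_mult)
  hence KK: "K * K < n" by simp
  have nonnb: "\<And>v. v \<in> V \<Longrightarrow> card (V - {v} - {u \<in> V. E v u}) \<le> K"
  proof -
    fix v assume v: "v \<in> V"
    have "{u \<in> V. E v u} \<subseteq> V - {v}" using irr by auto
    hence "card (V - {v} - {u \<in> V. E v u}) = card (V - {v}) - card {u \<in> V. E v u}"
      using fin by (intro card_Diff_subset) (auto intro: finite_subset)
    also have "\<dots> = n - 1 - degree V E v" using v fin unfolding degree_def n_def by simp
    also have "\<dots> \<le> K" using degle[OF v] unfolding K_def by simp
    finally show "card (V - {v} - {u \<in> V. E v u}) \<le> K" .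
  qed
  have c1: "c \<ge> 1"
  proof (rule ccontr)
    assume "\<not> c \<ge> 1" hence "c = 0" by simp
    hence "col ` V = {}" using colV by simp
    thus False using assms(2) by simp
  qed
  define r where "r i = (SOME v. v \<in> V \<and> col v = i)" for i
  have r: "\<And>i. i \<in> {1..c} \<Longrightarrow> r i \<in> V \<and> col (r i) = i"
  proof -
    fix i assume "i \<in> {1..c}"
    hence "\<exists>v. v \<in> V \<and> col v = i" using colV by (metis imageE)
    thus "r i \<in> V \<and> col (r i) = i" unfolding r_def by (rule someI_ex)
  qed
  define S where "S = r ` {1..c}"
  have SV: "S \<subseteq> V" using r S_def by auto
  have Scol: "{1..c} \<subseteq> col ` S" using r S_def by force
  have cardS: "card S \<le> c" unfolding S_def using card_image_le[of "{1..c}" r] by simp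
  define v0 where "v0 = r 1"
  have v0S: "v0 \<in> S" using c1 S_def v0_def by auto
  have v0V: "v0 \<in> V" using v0S SV by auto
  define U where "U = {u \<in> V. u \<notin> S \<and> \<not>(\<exists>s\<in>S. E u s)}"
  have "U \<subseteq> V - {v0} - {u \<in> V. E v0 u}" using v0S sym unfolding U_def by blast
  hence cU: "card U \<le> K" using nonnb[OF v0V] fin by (meson card_mono finite_Diff le_trans)
  have finU: "finite U" using fin U_def by auto
  define B where "B = (\<Union>u\<in>U. V - {u} - {w \<in> V. E u w})"
  have "card B \<le> (\<Sum>u\<in>U. card (V - {u} - {w \<in> V. E u w}))"
    unfolding B_def using finU by (rule card_UN_le)
  also have "\<dots> \<le> card U * K"
    using sum_bounded_above[of U "\<lambda>u. card (V - {u} - {w \<in> V. E u w})" K] nonnb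
    unfolding U_def by auto
  also have "\<dots> \<le> K * K" using cU by simp
  finally have "card B < n" using KK by simp
  moreover have "B \<subseteq> V" unfolding B_def by auto
  ultimately have "\<not> V \<subseteq> B" using fin n_def
    by (metis card_mono finite_subset leD)
  then obtain x where x: "x \<in> V" "x \<notin> B" by blast
  define D where "D = insert x S"
  have dom: "dominating_set V E D"
    unfolding dominating_set_def
  proof (intro conjI ballI)
    show "D \<subseteq> V" using x SV D_def by auto
  next
    fix v assume v: "v \<in> V"
    show "v \<in> D \<or> (\<exists>u\<in>D. E v u)"
    proof (cases "v \<in> U")
      case True
      hence "v = x \<or> E v x" using x v unfolding B_def by blast
      thus ?thesis using D_def by auto
    next
      case False
      thus ?thesis using v unfolding U_def D_def by auto
    qed
  qed
  have trop: "tropical_dominating_set V E col c D"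
    unfolding tropical_dominating_set_def D_def using dom Scol D_def by auto
  have cardD: "card D \<le> c + 1"
  proof -
    have "finite S" using fin SV finite_subset by auto
    thus ?thesis using cardS unfolding D_def by (simp add: card_insert_if)
  qed
  have finset: "finite {card D | D. tropical_dominating_set V E col c D}"
  proof (rule finite_subset)
    show "{card D | D. tropical_dominating_set V E col c D} \<subseteq> {0..n}"
      using fin unfolding tropical_dominating_set_def dominating_set_def n_def
      by (auto intro: card_mono)
  qed simp
  have "tropical_domination_number V E col c \<le> card D"
    unfolding tropical_domination_number_def using finset trop by (intro Min_le) auto
  thus ?thesis using cardD by simp
qed

end
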